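(* Let $G$ be a finite group and $E$ a $k^G$-comodule algebra. The map $c$ sending a $(k^G,E)$-Hopf torsor $T$ to the isomorphism class $[T^\times]$ of the $(G,E^\times)$-group torsor $T^\times$ induces a bijection of pointed sets $\mathcal{T}ors(k^G,E)\cong\mathrm{Tors}(G,E^\times)$.
   Context: $k^G$: Hopf algebra with $k$-basis $\{\delta_g\}$, $\delta_g\delta_{g'}=\partial_{g,g'}\delta_g$, unit $\sum_g\delta_g$, $\Delta(\delta_g)=\sum_{ab=g}\delta_a\otimes\delta_b$, $\varepsilon(\delta_g)=\partial_{g,e}$, $\sigma(\delta_g)=\delta_{g^{-1}}$. $E$ is a $k^G$-comodule algebra (coaction an algebra map) with $G$-action $\Delta_E(x)=\sum_g{}^gx\otimes\delta_g$ on $E^\times$. A $(k^G,E)$-Hopf module $T$ is a right $E$-module with coaction $\Delta_T(tx)=\Delta_T(t)\Delta_E(x)$, and $\Delta_T(u)=\sum_g{}^gu\otimes\delta_g$ gives a $G$-action on $T$. $T^\times=\{u:\ x\mapsto ux,\ E\to T\text{ bijective}\}$ (analogously $(T\otimes H)^\times$ over $E\otimes H$), $T^\bullet=\{u\in T^\times:\Delta_T(u)\in(T\otimes H)^\times\}$; a Hopf torsor is a Hopf module with $T^\bullet\ne\emptyset$; $\mathcal{T}ors(k^G,E)$ is the set of isomorphism classes (as Hopf modules) of Hopf torsors, pointed by $(E,\Delta_E)$. For $T$ a Hopf torsor, $T^\times$ with the restricted $G$-action and right $E^\times$-multiplication is a $(G,E^\times)$-group torsor (a nonempty left $G$-set with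 compatible, simply transitive right $E^\times$-action, ${}^g(pa)={}^gp\,{}^ga$). $\mathrm{Tors}(G,E^\times)$ is the set of isomorphism classes of $(G,E^\times)$-group torsors, pointed by the class of $E^\times$. *)

theory Defs
  imports "HOL-Algebra.Group" "HOL-Library.FuncSet"
begin

(* Conventions:
   - k is a commutative ring (type 'k), E is a k-algebra given by a type 'e :: ring_1
     together with a central ring homomorphism  scal : k -> E.
   - G is a finite group (HOL-Algebra record, carrier G).
   - Since k^G is free with basis delta_g, an element  sum_g x_g (x) delta_g  of  M (x) k^G
     is represented by the function  g |-> x_g  on carrier G.  Thus a coaction on M is a
     map  Delta :: 'm => 'g => 'm, and  Delta x g  is the coefficient of delta_g. *)

definition k_algebra :: "('k::comm_ring_1 \<Rightarrow> 'e::ring_1) \<Rightarrow> bool" where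
  "k_algebra scal \<longleftrightarrow>
     scal 1 = 1 \<and> (\<forall>a b. scal (a + b) = scal a + scal b) \<and>
     (\<forall>a b. scal (a * b) = scal a * scal b) \<and> (\<forall>a x. scal a * x = x * scal a)"

text \<open>Coassociativity for
  Delta(delta_g) = sum over ab=g of delta_a (x) delta_b, and counit eps(delta_g) = [g = 1].\<close>
definition comodule :: "('g,'z) monoid_scheme \<Rightarrow> ('m::ab_group_add \<Rightarrow> 'k \<Rightarrow> 'm)
      \<Rightarrow> ('m \<Rightarrow> 'g \<Rightarrow> 'm) \<Rightarrow> bool" where
  "comodule G sm D \<longleftrightarrow>
     (\<forall>x y. \<forall>g\<in>carrier G. D (x + y) g = D x g + D y g) \<and>
     (\<forall>x c. \<forall>g\<in>carrier G. D (sm x c) g = sm (D x g) c) \<and>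
     (\<forall>x. \<forall>a\<in>carrier G. \<forall>b\<in>carrier G. D (D x b) a = D x (a \<otimes>\<^bsub>G\<^esub> b)) \<and>
     (\<forall>x. D x \<one>\<^bsub>G\<^esub> = x)"

text \<open>k^G-comodule algebra: the coaction is moreover an algebra map E -> E (x) k^G,
  where E (x) k^G has the componentwise product and unit sum_g 1 (x) delta_g.\<close>
definition comodule_algebra :: "('g,'z) monoid_scheme \<Rightarrow> ('k::comm_ring_1 \<Rightarrow> 'e::ring_1)
      \<Rightarrow> ('e \<Rightarrow> 'g \<Rightarrow> 'e) \<Rightarrow> bool" where
  "comodule_algebra G scal D \<longleftrightarrow>
     k_algebra scal \<and> comodule G (\<lambda>x c. scal c * x) D \<and>
     (\<forall>x y. \<forall>g\<in>carrier G. D (x * y) g = D x g * D y g) \<and>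
     (\<forall>g\<in>carrier G. D 1 g = 1)"

definition hopf_module :: "('g,'z) monoid_scheme \<Rightarrow> ('k::comm_ring_1 \<Rightarrow> 'e::ring_1)
      \<Rightarrow> ('e \<Rightarrow> 'g \<Rightarrow> 'e) \<Rightarrow> ('t::ab_group_add \<Rightarrow> 'e \<Rightarrow> 't) \<Rightarrow> ('t \<Rightarrow> 'g \<Rightarrow> 't) \<Rightarrow> bool" where
  "hopf_module G scal D tm DT \<longleftrightarrow>
     (\<forall>t t' x. tm (t + t') x = tm t x + tm t' x) \<and>
     (\<forall>t x y. tm t (x + y) = tm t x + tm t y) \<and>
     (\<forall>t. tm t 1 = t) \<and>
     (\<forall>t x y. tm (tm t x) y = tm t (x * y)) \<and>
     comodule G (\<lambda>t c. tm t (scal c)) DT \<and>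
     (\<forall>t x. \<forall>g\<in>carrier G. DT (tm t x) g = tm (DT t g) (D x g))"

definition Tx :: "('t \<Rightarrow> 'e \<Rightarrow> 't) \<Rightarrow> 't set" where
  "Tx tm = {u. bij (tm u)}"

text \<open>(T (x) k^G)^x over E (x) k^G, with T (x) k^G and E (x) k^G represented as
  (extensional) functions on carrier G, and the componentwise module structure.\<close>
definition THx :: "('g,'z) monoid_scheme \<Rightarrow> ('t \<Rightarrow> 'e \<Rightarrow> 't) \<Rightarrow> ('g \<Rightarrow> 't) set" where
  "THx G tm = {f \<in> carrier G \<rightarrow>\<^sub>E UNIV.
      bij_betw (\<lambda>\<phi>. \<lambda>g\<in>carrier G. tm (f g) (\<phi> g)) (carrier G \<rightarrow>\<^sub>E UNIV) (carrier G \<rightarrow>\<^sub>E UNIV)}"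

definition Tbullet :: "('g,'z) monoid_scheme \<Rightarrow> ('t \<Rightarrow> 'e \<Rightarrow> 't) \<Rightarrow> ('t \<Rightarrow> 'g \<Rightarrow> 't) \<Rightarrow> 't set" where
  "Tbullet G tm DT = {u \<in> Tx tm. (\<lambda>g\<in>carrier G. DT u g) \<in> THx G tm}"

definition hopf_torsor :: "('g,'z) monoid_scheme \<Rightarrow> ('k::comm_ring_1 \<Rightarrow> 'e::ring_1)
      \<Rightarrow> ('e \<Rightarrow> 'g \<Rightarrow> 'e) \<Rightarrow> ('t::ab_group_add \<Rightarrow> 'e \<Rightarrow> 't) \<Rightarrow> ('t \<Rightarrow> 'g \<Rightarrow> 't) \<Rightarrow> bool" where
  "hopf_torsor G scal D tm DT \<longleftrightarrow> hopf_module G scal D tm DT \<and> Tbullet G tm DT \<noteq> {}"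

definition hopf_iso :: "('g,'z) monoid_scheme \<Rightarrow> ('t::ab_group_add \<Rightarrow> 'e \<Rightarrow> 't) \<Rightarrow> ('t \<Rightarrow> 'g \<Rightarrow> 't)
      \<Rightarrow> ('s::ab_group_add \<Rightarrow> 'e \<Rightarrow> 's) \<Rightarrow> ('s \<Rightarrow> 'g \<Rightarrow> 's) \<Rightarrow> bool" where
  "hopf_iso G tm DT tm' DT' \<longleftrightarrow> (\<exists>f. bij f \<and> (\<forall>t t'. f (t + t') = f t + f t') \<and>
      (\<forall>t x. f (tm t x) = tm' (f t) x) \<and> (\<forall>t. \<forall>g\<in>carrier G. f (DT t g) = DT' (f t) g))"

definition Eunits :: "'e::ring_1 set" where
  "Eunits = {a. \<exists>b. a * b = 1 \<and> b * a = 1}"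

definition group_torsor :: "('g,'z) monoid_scheme \<Rightarrow> ('e::ring_1 \<Rightarrow> 'g \<Rightarrow> 'e) \<Rightarrow> 'p set
      \<Rightarrow> ('g \<Rightarrow> 'p \<Rightarrow> 'p) \<Rightarrow> ('p \<Rightarrow> 'e \<Rightarrow> 'p) \<Rightarrow> bool" where
  "group_torsor G D P la ra \<longleftrightarrow>
     P \<noteq> {} \<and>
     (\<forall>g\<in>carrier G. \<forall>p\<in>P. la g p \<in> P) \<and>
     (\<forall>p\<in>P. la \<one>\<^bsub>G\<^esub> p = p) \<and>
     (\<forall>g\<in>carrier G. \<forall>h\<in>carrier G. \<forall>p\<in>P. la (g \<otimes>\<^bsub>G\<^esub> h) p = la g (la h p)) \<and>
     (\<forall>p\<in>P. \<forall>a\<in>Eunits. ra p a \<in> P) \<and>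
     (\<forall>p\<in>P. ra p 1 = p) \<and>
     (\<forall>p\<in>P. \<forall>a\<in>Eunits. \<forall>b\<in>Eunits. ra (ra p a) b = ra p (a * b)) \<and>
     (\<forall>p\<in>P. \<forall>q\<in>P. \<exists>!a. a \<in> Eunits \<and> ra p a = q) \<and>
     (\<forall>g\<in>carrier G. \<forall>p\<in>P. \<forall>a\<in>Eunits. la g (ra p a) = ra (la g p) (D a g))"

definition gtorsor_iso :: "('g,'z) monoid_scheme \<Rightarrow> 'p set \<Rightarrow> ('g \<Rightarrow> 'p \<Rightarrow> 'p) \<Rightarrow> ('p \<Rightarrow> 'e::ring_1 \<Rightarrow> 'p)
      \<Rightarrow> 'q set \<Rightarrow> ('g \<Rightarrow> 'q \<Rightarrow> 'q) \<Rightarrow> ('q \<Rightarrow> 'e \<Rightarrow> 'q) \<Rightarrow> bool" where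
  "gtorsor_iso G P la ra Q la' ra' \<longleftrightarrow> (\<exists>f. bij_betw f P Q \<and>
     (\<forall>g\<in>carrier G. \<forall>p\<in>P. f (la g p) = la' g (f p)) \<and>
     (\<forall>p\<in>P. \<forall>a\<in>Eunits. f (ra p a) = ra' (f p) a))"

end

theory Submission
  imports Defs
begin

lemma unit_iff_bij: "bij ((*) (a::'e::ring_1)) \<longleftrightarrow> a \<in> Eunits"
proof
  assume b: "bij ((*) a)"
  then obtain c where ab: "a * c = 1" by (metis bij_pointE)
  have "a * (c * a) = a * 1" by (simp add: mult.assoc[symmetric] ab)
  hence "c * a = 1" using b by (meson bij_is_inj injD)
  thus "a \<in> Eunits" using ab unfolding Eunits_def by blast
next
  assume "a \<in> Eunits"
  then obtain c where ab: "a * c = 1" "c * a = 1" unfolding Eunits_def by blast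
  show "bij ((*) a)"
    by (rule o_bij[where g="(*) c"]) (auto simp: fun_eq_iff mult.assoc[symmetric] ab)
qed

lemma Tx_mult: "Tx ((*) :: 'e::ring_1 \<Rightarrow> _) = Eunits"
  unfolding Tx_def using unit_iff_bij by blast

lemma Eunits_mult: "a \<in> Eunits \<Longrightarrow> b \<in> Eunits \<Longrightarrow> a * b \<in> Eunits"
  unfolding Eunits_def
  by (clarsimp, rename_tac c d, rule_tac x="d*c" in exI) (metis mult.assoc mult_1_right)

lemma Eunits_1: "1 \<in> Eunits" unfolding Eunits_def by auto

context
  fixes tm :: "'t \<Rightarrow> 'e::ring_1 \<Rightarrow> 't"
  assumes m1: "\<And>t. tm t 1 = t" and m2: "\<And>t x y. tm (tm t x) y = tm t (x*y)"
begin

lemma tm_comp: "tm (tm u a) = tm u \<circ> (*) a"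
  by (simp add: fun_eq_iff m2)

lemma Tx_ra: "u \<in> Tx tm \<Longrightarrow> a \<in> Eunits \<Longrightarrow> tm u a \<in> Tx tm"
  unfolding Tx_def using tm_comp unit_iff_bij bij_comp by fastforce

lemma Tx_trans: assumes "u \<in> Tx tm" "v \<in> Tx tm" shows "\<exists>!a. a \<in> Eunits \<and> tm u a = v"
proof -
  have bu: "bij (tm u)" and bv: "bij (tm v)" using assms by (auto simp: Tx_def)
  define a where "a = inv_into UNIV (tm u) v"
  have va: "tm u a = v" unfolding a_def using bu by (meson bij_is_surj surj_f_inv_f)
  have "(*) a = inv_into UNIV (tm u) \<circ> tm v"
    using bu by (auto simp: fun_eq_iff va[symmetric] m2 bij_is_inj)
  hence "bij ((*) a)" using bu bv by (simp add: bij_comp bij_imp_bij_inv)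
  hence "a \<in> Eunits" using unit_iff_bij by blast
  moreover have "\<And>b. tm u b = v \<Longrightarrow> b = a" using bu va by (metis bij_is_inj injD)
  ultimately show ?thesis using va by blast
qed

end

lemma THx_comp: fixes tm :: "'t \<Rightarrow> 'e \<Rightarrow> 't" assumes "f \<in> THx G tm" "g \<in> carrier G" shows "bij (tm (f g))"
proof -
  let ?M = "\<lambda>\<phi>. \<lambda>h\<in>carrier G. tm (f h) (\<phi> h)"
  have B: "bij_betw ?M (carrier G \<rightarrow>\<^sub>E UNIV) (carrier G \<rightarrow>\<^sub>E UNIV)" using assms THx_def by auto
  show ?thesis unfolding bij_def
  proof
    show "inj (tm (f g))"
    proof (rule injI)
      fix x y assume eq: "tm (f g) x = tm (f g) y"
      let ?p = "\<lambda>h\<in>carrier G. if h = g then x else x"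
      let ?q = "\<lambda>h\<in>carrier G. if h = g then y else x"
      have "?M ?p = ?M ?q" using eq by (auto simp: fun_eq_iff restrict_def)
      moreover have "?p \<in> carrier G \<rightarrow>\<^sub>E UNIV" "?q \<in> carrier G \<rightarrow>\<^sub>E UNIV" by auto
      ultimately have "?p = ?q" using inj_onD[OF bij_betw_imp_inj_on[OF B]] by blast
      hence "?p g = ?q g" by (rule fun_cong)
      thus "x = y" using assms(2) by simp
    qed
    show "surj (tm (f g))" unfolding surj_def
    proof
      fix t :: 't
      have "(\<lambda>h\<in>carrier G. t) \<in> carrier G \<rightarrow>\<^sub>E UNIV" by auto
      hence "(\<lambda>h\<in>carrier G. t) \<in> ?M ` (carrier G \<rightarrow>\<^sub>E UNIV)"
        using bij_betw_imp_surj_on[OF B] by simp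
      then obtain \<phi> where "\<phi> \<in> carrier G \<rightarrow>\<^sub>E UNIV" "?M \<phi> = (\<lambda>h\<in>carrier G. t)"
        by (rule imageE) auto
      hence "?M \<phi> g = (\<lambda>h\<in>carrier G. t) g" by simp
      hence "tm (f g) (\<phi> g) = t" using assms(2) by simp
      thus "\<exists>x. t = tm (f g) x" by metis
    qed
  qed
qed


lemma D_unit: assumes "comodule_algebra G scal D" "a \<in> Eunits" "g \<in> carrier G"
  shows "D a g \<in> Eunits"
proof -
  obtain b where ab: "a * b = 1" "b * a = 1" using assms(2) unfolding Eunits_def by blast
  have "D a g * D b g = 1" "D b g * D a g = 1" using assms(1,3) ab
    unfolding comodule_algebra_def by metis+
  thus ?thesis unfolding Eunits_def by blast
qed

lemma hm_m1: "hopf_module G scal D tm DT \<Longrightarrow> tm t 1 = t"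
  unfolding hopf_module_def by blast
lemma hm_m2: "hopf_module G scal D tm DT \<Longrightarrow> tm (tm t x) y = tm t (x*y)"
  unfolding hopf_module_def by blast
lemma hm_lin: "hopf_module G scal D tm DT \<Longrightarrow> g \<in> carrier G \<Longrightarrow> DT (tm t x) g = tm (DT t g) (D x g)"
  unfolding hopf_module_def by blast

lemma DT_Tx: assumes ca: "comodule_algebra G scal D" and ht: "hopf_torsor G scal D tm DT"
  and u: "u \<in> Tx tm" and g: "g \<in> carrier G" shows "DT u g \<in> Tx tm"
proof -
  have hm: "hopf_module G scal D tm DT" using ht unfolding hopf_torsor_def by blast
  note m1 = hm_m1[OF hm] and m2 = hm_m2[OF hm]
  obtain u0 where u0: "u0 \<in> Tx tm" "(\<lambda>g\<in>carrier G. DT u0 g) \<in> THx G tm"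
    using ht unfolding hopf_torsor_def Tbullet_def by blast
  have "bij (tm ((\<lambda>g\<in>carrier G. DT u0 g) g))" by (rule THx_comp[OF u0(2) g])
  hence d0: "DT u0 g \<in> Tx tm" using g by (simp add: Tx_def)
  obtain a where a: "a \<in> Eunits" "tm u0 a = u" using Tx_trans[of tm, OF m1 m2 u0(1) u] by blast
  have "DT u g = tm (DT u0 g) (D a g)" using hm_lin[OF hm g] a(2) by metis
  thus ?thesis using Tx_ra[of tm, OF m1 m2 d0 D_unit[OF ca a(1) g]] by simp
qed

lemma part1: assumes ca: "comodule_algebra G scal D" and ht: "hopf_torsor G scal D tm DT"
  shows "group_torsor G D (Tx tm) (\<lambda>g u. DT u g) tm"
proof -
  have hm: "hopf_module G scal D tm DT" using ht unfolding hopf_torsor_def by blast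
  note m1 = hm_m1[OF hm] and m2 = hm_m2[OF hm]
  have cm: "comodule G (\<lambda>t c. tm t (scal c)) DT" using hm unfolding hopf_module_def by blast
  obtain u0 where "u0 \<in> Tx tm" using ht unfolding hopf_torsor_def Tbullet_def by blast
  hence ne: "Tx tm \<noteq> {}" by blast
  show ?thesis unfolding group_torsor_def
    using ne DT_Tx[OF ca ht] cm[unfolded comodule_def] Tx_ra[of tm, OF m1 m2] m1 m2
      Tx_trans[of tm, OF m1 m2] hm_lin[OF hm]
    by simp
qed


lemma hm_add2: "hopf_module G scal D tm DT \<Longrightarrow> tm t (x + y) = tm t x + tm t y"
  unfolding hopf_module_def by blast

lemma part2: assumes ca: "comodule_algebra G scal D" and ht: "hopf_torsor G scal D tm DT"
  and ht': "hopf_torsor G scal D tm' DT'"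
  shows "hopf_iso G tm DT tm' DT' \<longleftrightarrow> gtorsor_iso G (Tx tm) (\<lambda>g u. DT u g) tm (Tx tm') (\<lambda>g u. DT' u g) tm'"
proof -
  have hm: "hopf_module G scal D tm DT" using ht unfolding hopf_torsor_def by blast
  have hm': "hopf_module G scal D tm' DT'" using ht' unfolding hopf_torsor_def by blast
  note m1 = hm_m1[OF hm] and m2 = hm_m2[OF hm]
  note m1' = hm_m1[OF hm'] and m2' = hm_m2[OF hm']
  show ?thesis
  proof
    assume "hopf_iso G tm DT tm' DT'"
    then obtain f where bf: "bij f" and lin: "\<And>t x. f (tm t x) = tm' (f t) x"
      and col: "\<And>t g. g \<in> carrier G \<Longrightarrow> f (DT t g) = DT' (f t) g"
      unfolding hopf_iso_def by blast
    have img: "f u \<in> Tx tm'" if "u \<in> Tx tm" for u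
    proof -
      have "tm' (f u) = f \<circ> tm u" by (simp add: fun_eq_iff lin)
      thus ?thesis using that bf by (simp add: Tx_def bij_comp)
    qed
    have pre: "inv_into UNIV f v \<in> Tx tm" if "v \<in> Tx tm'" for v
    proof -
      let ?u = "inv_into UNIV f v"
      have fu: "f ?u = v" using bf by (meson bij_is_surj surj_f_inv_f)
      have "tm ?u x = inv_into UNIV f (tm' v x)" for x
      proof -
        have "f (tm ?u x) = tm' v x" using lin fu by simp
        thus ?thesis using bf by (metis bij_is_inj inv_f_f)
      qed
      hence "tm ?u = inv_into UNIV f \<circ> tm' v" by (simp add: fun_eq_iff)
      thus ?thesis using that bf by (simp add: Tx_def bij_comp bij_imp_bij_inv)
    qed
    have "bij_betw f (Tx tm) (Tx tm')"
      unfolding bij_betw_def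
    proof
      show "inj_on f (Tx tm)" using bf bij_is_inj inj_on_subset by blast
      show "f ` Tx tm = Tx tm'"
      proof
        show "f ` Tx tm \<subseteq> Tx tm'" using img by blast
        show "Tx tm' \<subseteq> f ` Tx tm"
        proof
          fix v assume v: "v \<in> Tx tm'"
          have "f (inv_into UNIV f v) = v" using bf by (meson bij_is_surj surj_f_inv_f)
          thus "v \<in> f ` Tx tm" using pre[OF v] by (metis imageI)
        qed
      qed
    qed
    thus "gtorsor_iso G (Tx tm) (\<lambda>g u. DT u g) tm (Tx tm') (\<lambda>g u. DT' u g) tm'"
      unfolding gtorsor_iso_def using col lin by blast
  next
    assume "gtorsor_iso G (Tx tm) (\<lambda>g u. DT u g) tm (Tx tm') (\<lambda>g u. DT' u g) tm'"
    then obtain \<phi> where bp: "bij_betw \<phi> (Tx tm) (Tx tm')"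
      and lac: "\<And>g p. g \<in> carrier G \<Longrightarrow> p \<in> Tx tm \<Longrightarrow> \<phi> (DT p g) = DT' (\<phi> p) g"
      and rac: "\<And>p a. p \<in> Tx tm \<Longrightarrow> a \<in> Eunits \<Longrightarrow> \<phi> (tm p a) = tm' (\<phi> p) a"
      unfolding gtorsor_iso_def by blast
    obtain u0 where u0: "u0 \<in> Tx tm" using ht unfolding hopf_torsor_def Tbullet_def by blast
    define v where "v = \<phi> u0"
    have v: "v \<in> Tx tm'" using bp u0 v_def bij_betwE by blast
    define I where "I = inv_into UNIV (tm u0)"
    have bu: "bij (tm u0)" using u0 by (simp add: Tx_def)
    have bv: "bij (tm' v)" using v by (simp add: Tx_def)
    have I1: "tm u0 (I t) = t" for t unfolding I_def using bu by (meson bij_is_surj surj_f_inv_f)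
    have I2: "I (tm u0 y) = y" for y unfolding I_def using bu by (meson bij_is_inj inv_f_f)
    define f where "f = (\<lambda>t. tm' v (I t))"
    have "bij f" unfolding f_def I_def
      using bij_comp[OF bij_imp_bij_inv[OF bu] bv] by (simp add: comp_def)
    moreover have "f (t + t') = f t + f t'" for t t'
    proof -
      have "tm u0 (I t + I t') = t + t'" using hm_add2[OF hm] I1 by simp
      hence "I (t + t') = I t + I t'" using I2 by metis
      thus ?thesis unfolding f_def using hm_add2[OF hm'] by simp
    qed
    moreover have lin: "f (tm t x) = tm' (f t) x" for t x
    proof -
      have "tm u0 (I t * x) = tm t x" using m2 I1 by metis
      hence "I (tm t x) = I t * x" using I2 by metis
      thus ?thesis unfolding f_def using m2' by simp
    qed
    moreover have fw: "f w = \<phi> w" if wT: "w \<in> Tx tm" for w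
    proof -
      obtain a where a: "a \<in> Eunits" "tm u0 a = w" using Tx_trans[of tm, OF m1 m2 u0 wT] by blast
      have "f w = tm' v a" unfolding f_def using a I2 by metis
      also have "\<dots> = \<phi> w" using rac[OF u0 a(1)] a(2) v_def by simp
      finally show ?thesis .
    qed
    moreover have "f (DT t g) = DT' (f t) g" if g: "g \<in> carrier G" for t g
    proof -
      have "DT t g = tm (DT u0 g) (D (I t) g)" using hm_lin[OF hm g] I1 by metis
      hence "f (DT t g) = tm' (f (DT u0 g)) (D (I t) g)" using lin by simp
      also have "\<dots> = tm' (DT' v g) (D (I t) g)"
        using fw[OF DT_Tx[OF ca ht u0 g]] lac[OF g u0] v_def by simp
      also have "\<dots> = DT' (f t) g" unfolding f_def using hm_lin[OF hm' g] by simp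
      finally show ?thesis .
    qed
    ultimately show "hopf_iso G tm DT tm' DT'" unfolding hopf_iso_def by blast
  qed
qed


lemma THx_intro: assumes "\<forall>g\<in>carrier G. bij (tm (f g))" shows "(\<lambda>g\<in>carrier G. f g) \<in> THx G tm"
proof -
  let ?F = "\<lambda>g\<in>carrier G. f g"
  let ?M = "\<lambda>\<phi>. \<lambda>h\<in>carrier G. tm (?F h) (\<phi> h)"
  let ?N = "\<lambda>\<psi>. \<lambda>h\<in>carrier G. inv_into UNIV (tm (f h)) (\<psi> h)"
  have "bij_betw ?M (carrier G \<rightarrow>\<^sub>E UNIV) (carrier G \<rightarrow>\<^sub>E UNIV)"
  proof (rule bij_betw_byWitness[where f'="?N"])
    show "\<forall>a\<in>carrier G \<rightarrow>\<^sub>E UNIV. ?N (?M a) = a"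
      using assms by (auto simp: fun_eq_iff PiE_def extensional_def bij_is_inj)
    show "\<forall>a\<in>carrier G \<rightarrow>\<^sub>E UNIV. ?M (?N a) = a"
      using assms by (auto simp: fun_eq_iff PiE_def extensional_def bij_is_surj surj_f_inv_f)
  qed auto
  thus ?thesis unfolding THx_def by auto
qed

lemma twisted: fixes D :: "'e::ring_1 \<Rightarrow> 'g \<Rightarrow> 'e" assumes ca: "comodule_algebra G scal D"
  and cu: "\<forall>g\<in>carrier G. c g \<in> Eunits" and c1: "c \<one>\<^bsub>G\<^esub> = 1"
  and cm: "\<forall>a\<in>carrier G. \<forall>b\<in>carrier G. c (a \<otimes>\<^bsub>G\<^esub> b) = c a * D (c b) a"
  shows "hopf_torsor G scal D (*) (\<lambda>x g. c g * D x g)"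
proof -
  have ka: "k_algebra scal" and cmE: "comodule G (\<lambda>x c. scal c * x) D"
    and mul: "\<forall>x y. \<forall>g\<in>carrier G. D (x * y) g = D x g * D y g"
    and one: "\<forall>g\<in>carrier G. D 1 g = 1"
    using ca unfolding comodule_algebra_def by auto
  have cen: "\<And>a x. scal a * x = x * scal a" using ka unfolding k_algebra_def by blast
  have add: "\<And>x y g. g \<in> carrier G \<Longrightarrow> D (x + y) g = D x g + D y g" using cmE unfolding comodule_def by blast
  have sc: "\<And>x k g. g \<in> carrier G \<Longrightarrow> D (scal k * x) g = scal k * D x g" using cmE unfolding comodule_def by blast
  have co: "\<And>x a b. a \<in> carrier G \<Longrightarrow> b \<in> carrier G \<Longrightarrow> D (D x b) a = D x (a \<otimes>\<^bsub>G\<^esub> b)"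
    using cmE unfolding comodule_def by blast
  have cu1: "\<And>x. D x \<one>\<^bsub>G\<^esub> = x" using cmE unfolding comodule_def by blast
  have dsc: "D (scal k) g = scal k" if "g \<in> carrier G" for k g
    using sc[OF that, of k 1] one that by simp
  have "comodule G (\<lambda>t k. t * scal k) (\<lambda>x g. c g * D x g)"
    unfolding comodule_def
  proof (intro conjI ballI allI)
    fix x y g assume g: "g \<in> carrier G"
    show "c g * D (x + y) g = c g * D x g + c g * D y g" using add[OF g] by (simp add: distrib_left)
  next
    fix x k g assume g: "g \<in> carrier G"
    show "c g * D (x * scal k) g = c g * D x g * scal k"
      using mul g dsc[OF g] by (simp add: mult.assoc)
  next
    fix x a b assume a: "a \<in> carrier G" and b: "b \<in> carrier G"
    show "c a * D (c b * D x b) a = c (a \<otimes>\<^bsub>G\<^esub> b) * D x (a \<otimes>\<^bsub>G\<^esub> b)"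
      using mul a co[OF a b] cm a b by (simp add: mult.assoc)
  next
    fix x show "c \<one>\<^bsub>G\<^esub> * D x \<one>\<^bsub>G\<^esub> = x" using c1 cu1 by simp
  qed
  hence hm: "hopf_module G scal D (*) (\<lambda>x g. c g * D x g)"
    unfolding hopf_module_def using mul by (auto simp: algebra_simps)
  have "(\<lambda>g\<in>carrier G. c g * D 1 g) \<in> THx G (*)"
  proof (rule THx_intro, rule ballI)
    fix g assume "g \<in> carrier G"
    thus "bij ((*) (c g * D 1 g))" using one cu unit_iff_bij[of "c g"] by simp
  qed
  moreover have "(1::'e) \<in> Tx (*)" using Tx_mult Eunits_1 by blast
  ultimately have "1 \<in> Tbullet G (*) (\<lambda>x g. c g * D x g)" unfolding Tbullet_def by simp
  thus ?thesis using hm unfolding hopf_torsor_def by blast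
qed

lemma part4: assumes ca: "comodule_algebra G scal D"
  shows "hopf_torsor G scal D (*) D \<and>
      gtorsor_iso G (Tx (*)) (\<lambda>g u. D u g) (*) Eunits (\<lambda>g u. D u g) (*)"
proof
  have "hopf_torsor G scal D (*) (\<lambda>x g. (\<lambda>_. 1) g * D x g)"
    by (rule twisted[OF ca]) (use ca in \<open>auto simp: Eunits_1 comodule_algebra_def\<close>)
  thus "hopf_torsor G scal D (*) D" by simp
  show "gtorsor_iso G (Tx (*)) (\<lambda>g u. D u g) (*) Eunits (\<lambda>g u. D u g) (*)"
    unfolding gtorsor_iso_def Tx_mult by (rule exI[of _ id]) auto
qed

lemma part3:
  fixes D :: "'e::ring_1 \<Rightarrow> 'g \<Rightarrow> 'e"
  assumes grp: "group G" and ca: "comodule_algebra G scal D"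
  and gt: "group_torsor G D P la ra"
  shows "\<exists>(tm :: 'e \<Rightarrow> 'e \<Rightarrow> 'e) DT. hopf_torsor G scal D tm DT \<and>
           gtorsor_iso G (Tx tm) (\<lambda>g u. DT u g) tm P la ra"
proof -
  have ne: "P \<noteq> {}" and lcl: "\<forall>g\<in>carrier G. \<forall>p\<in>P. la g p \<in> P"
    and l1: "\<forall>p\<in>P. la \<one>\<^bsub>G\<^esub> p = p"
    and lm: "\<forall>g\<in>carrier G. \<forall>h\<in>carrier G. \<forall>p\<in>P. la (g \<otimes>\<^bsub>G\<^esub> h) p = la g (la h p)"
    and rcl: "\<forall>p\<in>P. \<forall>a\<in>Eunits. ra p a \<in> P"
    and r1: "\<forall>p\<in>P. ra p 1 = p"
    and rm: "\<forall>p\<in>P. \<forall>a\<in>Eunits. \<forall>b\<in>Eunits. ra (ra p a) b = ra p (a * b)"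
    and st: "\<forall>p\<in>P. \<forall>q\<in>P. \<exists>!a. a \<in> Eunits \<and> ra p a = q"
    and cp: "\<forall>g\<in>carrier G. \<forall>p\<in>P. \<forall>a\<in>Eunits. la g (ra p a) = ra (la g p) (D a g)"
    using gt unfolding group_torsor_def by auto
  obtain p0 where p0: "p0 \<in> P" using ne by blast
  define c where "c g = (THE a. a \<in> Eunits \<and> ra p0 a = la g p0)" for g
  have cP: "c g \<in> Eunits \<and> ra p0 (c g) = la g p0" if "g \<in> carrier G" for g
    unfolding c_def by (rule theI') (use st p0 lcl that in blast)
  have cU: "c g = a" if "g \<in> carrier G" "a \<in> Eunits" "ra p0 a = la g p0" for g a
    unfolding c_def by (rule the1_equality) (use st p0 lcl that in auto)
  have one: "\<one>\<^bsub>G\<^esub> \<in> carrier G" using grp by (simp add: group.is_monoid monoid.one_closed)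
  have c1: "c \<one>\<^bsub>G\<^esub> = 1" using cU[OF one Eunits_1] r1 l1 p0 by simp
  have cm: "\<forall>a\<in>carrier G. \<forall>b\<in>carrier G. c (a \<otimes>\<^bsub>G\<^esub> b) = c a * D (c b) a"
  proof (intro ballI)
    fix a b assume a: "a \<in> carrier G" and b: "b \<in> carrier G"
    have ab: "a \<otimes>\<^bsub>G\<^esub> b \<in> carrier G" using grp a b by (simp add: group.is_monoid monoid.m_closed)
    have du: "D (c b) a \<in> Eunits" using D_unit[OF ca _ a] cP[OF b] by blast
    have "la (a \<otimes>\<^bsub>G\<^esub> b) p0 = la a (ra p0 (c b))" using lm a b p0 cP[OF b] by simp
    also have "\<dots> = ra (la a p0) (D (c b) a)" using cp a p0 cP[OF b] by blast
    also have "\<dots> = ra (ra p0 (c a)) (D (c b) a)" using cP[OF a] by simp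
    also have "\<dots> = ra p0 (c a * D (c b) a)" using rm p0 conjunct1[OF cP[OF a]] du by blast
    finally show "c (a \<otimes>\<^bsub>G\<^esub> b) = c a * D (c b) a"
      using cU[OF ab] Eunits_mult[OF conjunct1[OF cP[OF a]] du] by simp
  qed
  have cu: "\<forall>g\<in>carrier G. c g \<in> Eunits" using cP by blast
  have ht: "hopf_torsor G scal D (*) (\<lambda>x g. c g * D x g)" by (rule twisted[OF ca cu c1 cm])
  have bb: "bij_betw (ra p0) Eunits P"
    unfolding bij_betw_def
  proof
    show "inj_on (ra p0) Eunits"
    proof (rule inj_onI)
      fix a b assume a: "a \<in> Eunits" and b: "b \<in> Eunits" and e: "ra p0 a = ra p0 b"
      have "ra p0 a \<in> P" using rcl p0 a by blast
      thus "a = b" using st p0 a b e by metis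
    qed
    show "ra p0 ` Eunits = P" using rcl p0 st by blast
  qed
  have lc: "ra p0 (c g * D a g) = la g (ra p0 a)" if g: "g \<in> carrier G" and a: "a \<in> Eunits" for g a
  proof -
    have du: "D a g \<in> Eunits" using D_unit[OF ca a g] .
    have "la g (ra p0 a) = ra (la g p0) (D a g)" using cp g p0 a by blast
    also have "\<dots> = ra (ra p0 (c g)) (D a g)" using cP[OF g] by simp
    also have "\<dots> = ra p0 (c g * D a g)" using rm p0 conjunct1[OF cP[OF g]] du by blast
    finally show ?thesis by simp
  qed
  have rc: "ra p0 (a * b) = ra (ra p0 a) b" if "a \<in> Eunits" "b \<in> Eunits" for a b
    using rm p0 that by simp
  have "gtorsor_iso G (Tx (*)) (\<lambda>g u. c g * D u g) (*) P la ra"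
    unfolding gtorsor_iso_def Tx_mult using bb lc rc by blast
  hence "hopf_torsor G scal D (*) (\<lambda>x g. c g * D x g) \<and>
     gtorsor_iso G (Tx (*)) (\<lambda>g u. (\<lambda>x g. c g * D x g) u g) (*) P la ra" using ht by simp
  thus ?thesis by blast
qed

theorem corollary3p8:
  fixes G :: "('g,'z) monoid_scheme"
    and scal :: "'k::comm_ring_1 \<Rightarrow> 'e::ring_1"
    and D :: "'e \<Rightarrow> 'g \<Rightarrow> 'e"
  assumes "group G" and "finite (carrier G)" and "comodule_algebra G scal D"
  shows
    "\<comment> \<open>c is well defined: T^x of a Hopf torsor is a (G,E^x)-group torsor\<close>
     (\<forall>(tm :: 't::ab_group_add \<Rightarrow> 'e \<Rightarrow> 't) DT. hopf_torsor G scal D tm DT \<longrightarrow>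
        group_torsor G D (Tx tm) (\<lambda>g u. DT u g) tm) \<and>
     \<comment> \<open>c respects isomorphism and is injective on isomorphism classes\<close>
     (\<forall>(tm :: 't \<Rightarrow> 'e \<Rightarrow> 't) DT (tm' :: 's::ab_group_add \<Rightarrow> 'e \<Rightarrow> 's) DT'.
        hopf_torsor G scal D tm DT \<longrightarrow> hopf_torsor G scal D tm' DT' \<longrightarrow>
        (hopf_iso G tm DT tm' DT' \<longleftrightarrow>
         gtorsor_iso G (Tx tm) (\<lambda>g u. DT u g) tm (Tx tm') (\<lambda>g u. DT' u g) tm')) \<and>
     \<comment> \<open>c is surjective onto isomorphism classes of group torsors\<close>
     (\<forall>(P :: 'p set) la ra. group_torsor G D P la ra \<longrightarrow>
        (\<exists>(tm :: 'e \<Rightarrow> 'e \<Rightarrow> 'e) DT. hopf_torsor G scal D tm DT \<and>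
           gtorsor_iso G (Tx tm) (\<lambda>g u. DT u g) tm P la ra)) \<and>
     \<comment> \<open>c is a map of pointed sets: (E, D) is a Hopf torsor and c(E) is the class of E^x\<close>
     (hopf_torsor G scal D (*) D \<and>
      gtorsor_iso G (Tx (*)) (\<lambda>g u. D u g) (*) Eunits (\<lambda>g u. D u g) (*))"
proof (intro conjI allI impI)
  show "hopf_torsor G scal D (*) D" using part4[OF assms(3)] by (rule conjunct1)
  show "gtorsor_iso G (Tx (*)) (\<lambda>g u. D u g) (*) Eunits (\<lambda>g u. D u g) (*)"
    using part4[OF assms(3)] by (rule conjunct2)
next
  fix tm :: "'t::ab_group_add \<Rightarrow> 'e \<Rightarrow> 't" and DT
  assume "hopf_torsor G scal D tm DT"
  thus "group_torsor G D (Tx tm) (\<lambda>g u. DT u g) tm" by (rule part1[OF assms(3)])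
next
  fix tm :: "'t::ab_group_add \<Rightarrow> 'e \<Rightarrow> 't" and DT
    and tm' :: "'s::ab_group_add \<Rightarrow> 'e \<Rightarrow> 's" and DT'
  assume "hopf_torsor G scal D tm DT" "hopf_torsor G scal D tm' DT'"
  thus "hopf_iso G tm DT tm' DT' \<longleftrightarrow>
         gtorsor_iso G (Tx tm) (\<lambda>g u. DT u g) tm (Tx tm') (\<lambda>g u. DT' u g) tm'"
    by (rule part2[OF assms(3)])
next
  fix P :: "'p set" and la ra
  assume "group_torsor G D P la ra"
  thus "\<exists>(tm :: 'e \<Rightarrow> 'e \<Rightarrow> 'e) DT. hopf_torsor G scal D tm DT \<and>
           gtorsor_iso G (Tx tm) (\<lambda>g u. DT u g) tm P la ra"
    by (rule part3[OF assms(1,3)])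
qed

end
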